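(* Let $H$ and $U$ be Hilbert spaces, let $A\colon D(A)\subset H\to H$ generate a strongly continuous contraction semigroup $\{e^{tA}\}_{t\ge0}$ on $H$, and let $B\colon U\to H$ be bounded linear with adjoint $B^*$. Suppose there exist constants $\rho,T_0>0$ and a positive continuous function $c\colon(0,\infty)\to\mathbb{R}$ such that for every $T\in(0,T_0]$ and every $\tilde\alpha\in L^\infty([0,T],[0,1])$ with $\int_0^T\tilde\alpha(t)\,dt\ge\rho T$, the function $\tilde\alpha$ is of class $\mathcal{K}(A,B,T,c(T))$. Let $(a_n,b_n)$, $n\in\mathbb{N}$, be a sequence of pairwise disjoint intervals in $[0,\infty)$ and let $\alpha\in L^\infty([0,\infty),[0,1])$ satisfy $\int_{a_n}^{b_n}\alpha(t)\,dt\ge\rho(b_n-a_n)$ for all $n$ and $\sum_{n=1}^\infty c(b_n-a_n)=\infty$. Then for every $z_0\in H$, the mild solution $z(\cdot)$ of $\dot z=Az-\alpha(t)BB^*z$, $z(0)=z_0$, satisfies $\|z(t)\|_H\to0$ as $t\to\infty$.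
   Context: For $T>0$ and $c>0$, a function $\tilde\alpha\in L^\infty([0,T],[0,1])$ is said to be of class $\mathcal{K}(A,B,T,c)$ if $\int_0^T\tilde\alpha(t)\|B^*e^{tA}z_0\|_U^2\,dt\ge c\|z_0\|_H^2$ for all $z_0\in H$. The mild solution of $\dot z=Az-\alpha(t)BB^*z$, $z(0)=z_0$ is the unique $z\in C([0,\infty);H)$ with $z(t)=e^{tA}z_0-\int_0^te^{(t-s)A}\alpha(s)BB^*z(s)\,ds$ for all $t\ge0$. *)

theory Defs
  imports "HOL-Analysis.Analysis"
begin

text \<open>Strongly continuous contraction semigroup S t = e^{tA} on a (real) Hilbert space.\<close>
definition C0_contraction_semigroup :: "(real \<Rightarrow> 'h::{real_inner,complete_space} \<Rightarrow> 'h) \<Rightarrow> bool" where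
  "C0_contraction_semigroup S \<longleftrightarrow>
     (\<forall>t\<ge>0. bounded_linear (S t)) \<and>
     S 0 = id \<and>
     (\<forall>t\<ge>0. \<forall>s\<ge>0. S (t + s) = S t \<circ> S s) \<and>
     (\<forall>t\<ge>0. \<forall>x. norm (S t x) \<le> norm x) \<and>
     (\<forall>x. continuous_on {0..} (\<lambda>t. S t x))"

definition is_adjoint :: "('u::real_inner \<Rightarrow> 'h::real_inner) \<Rightarrow> ('h \<Rightarrow> 'u) \<Rightarrow> bool" where
  "is_adjoint B Bs \<longleftrightarrow> (\<forall>u h. inner (B u) h = inner u (Bs h))"

text \<open>(A representative of) an element of L^infty(I,[0,1]).\<close>
definition Linf01 :: "real set \<Rightarrow> (real \<Rightarrow> real) \<Rightarrow> bool" where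
  "Linf01 I a \<longleftrightarrow> set_borel_measurable lborel I a \<and> (\<forall>t\<in>I. 0 \<le> a t \<and> a t \<le> 1)"

definition classK :: "(real \<Rightarrow> 'h::{real_inner,complete_space} \<Rightarrow> 'h) \<Rightarrow> ('h \<Rightarrow> 'u::real_inner)
    \<Rightarrow> real \<Rightarrow> real \<Rightarrow> (real \<Rightarrow> real) \<Rightarrow> bool" where
  "classK S Bs T c a \<longleftrightarrow> Linf01 {0..T} a \<and>
     (\<forall>z0. (LBINT t:{0..T}. a t * (norm (Bs (S t z0)))\<^sup>2) \<ge> c * (norm z0)\<^sup>2)"

text \<open>Mild solution of z' = A z - alpha(t) B B^* z, z(0) = z0.\<close>
definition mild_solution :: "(real \<Rightarrow> 'h::{real_inner,complete_space} \<Rightarrow> 'h) \<Rightarrow> ('u::real_inner \<Rightarrow> 'h)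
    \<Rightarrow> ('h \<Rightarrow> 'u) \<Rightarrow> (real \<Rightarrow> real) \<Rightarrow> 'h \<Rightarrow> (real \<Rightarrow> 'h) \<Rightarrow> bool" where
  "mild_solution S B Bs \<alpha> z0 z \<longleftrightarrow> continuous_on {0..} z \<and>
     (\<forall>t\<ge>0. ((\<lambda>s. S (t - s) (\<alpha> s *\<^sub>R B (Bs (z s)))) has_integral (S t z0 - z t)) {0..t})"

end

theory Submission
  imports Defs
begin

locale sys =
  fixes S :: "real \<Rightarrow> 'h::{real_inner,complete_space} \<Rightarrow> 'h"
    and B :: "'u::{real_inner,complete_space} \<Rightarrow> 'h"
    and Bs :: "'h \<Rightarrow> 'u"
    and \<alpha> :: "real \<Rightarrow> real"
    and z0 :: 'h and z :: "real \<Rightarrow> 'h"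
  assumes sg: "C0_contraction_semigroup S"
    and B: "bounded_linear B" and Bs: "is_adjoint B Bs"
    and alpha: "Linf01 {0..} \<alpha>"
    and sol: "mild_solution S B Bs \<alpha> z0 z"
begin

lemma S_lin: "t \<ge> 0 \<Longrightarrow> bounded_linear (S t)"
  using sg by (auto simp: C0_contraction_semigroup_def)
lemma S_0: "S 0 x = x"
  using sg by (auto simp: C0_contraction_semigroup_def)
lemma S_add: "t \<ge> 0 \<Longrightarrow> s \<ge> 0 \<Longrightarrow> S (t + s) x = S t (S s x)"
  using sg by (auto simp: C0_contraction_semigroup_def)
lemma S_contr: "t \<ge> 0 \<Longrightarrow> norm (S t x) \<le> norm x"
  using sg by (auto simp: C0_contraction_semigroup_def)
lemma S_cont: "continuous_on {0..} (\<lambda>t. S t x)"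
  using sg by (auto simp: C0_contraction_semigroup_def)
lemma S_diff: "t \<ge> 0 \<Longrightarrow> S t x - S t y = S t (x - y)"
  using S_lin[of t] by (simp add: linear_simps)

lemma z_cont: "continuous_on {0..} z"
  using sol by (simp add: mild_solution_def)
lemma z_int: "t \<ge> 0 \<Longrightarrow> ((\<lambda>s. S (t - s) (\<alpha> s *\<^sub>R B (Bs (z s)))) has_integral (S t z0 - z t)) {0..t}"
  using sol by (simp add: mild_solution_def)

lemma alpha_bnd: "t \<ge> 0 \<Longrightarrow> 0 \<le> \<alpha> t \<and> \<alpha> t \<le> 1"
  using alpha by (auto simp: Linf01_def)
lemma alpha_meas: "(\<lambda>x. indicator {0..} x * \<alpha> x) \<in> borel_measurable lborel"
  using alpha by (simp add: Linf01_def set_borel_measurable_def)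

lemma adj: "inner (B u) h = inner u (Bs h)"
  using Bs by (simp add: is_adjoint_def)

lemma Bs_lin: "bounded_linear Bs"
proof -
  obtain nB where nB: "\<And>u. norm (B u) \<le> norm u * nB" "nB > 0"
    using bounded_linear.pos_bounded[OF B] by blast
  have eq: "x = y" if "\<And>u. inner u x = inner u y" for x y :: 'u
  proof -
    have "inner (x - y) x = inner (x - y) y" using that by simp
    then have "inner (x - y) (x - y) = 0" by (simp add: inner_diff_right)
    then show ?thesis by simp
  qed
  show ?thesis
  proof (rule bounded_linear_intro[where K = nB])
    fix x y show "Bs (x + y) = Bs x + Bs y"
      by (rule eq) (simp add: inner_add_right adj[symmetric])
  next
    fix r x show "Bs (r *\<^sub>R x) = r *\<^sub>R Bs x"
      by (rule eq) (simp add: adj[symmetric])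
  next
    fix x
    have "(norm (Bs x))\<^sup>2 = inner (B (Bs x)) x" by (simp add: adj power2_norm_eq_inner)
    also have "\<dots> \<le> norm (B (Bs x)) * norm x" by (rule norm_cauchy_schwarz)
    also have "\<dots> \<le> norm (Bs x) * nB * norm x" using nB by (simp add: mult_right_mono)
    finally have "norm (Bs x) * norm (Bs x) \<le> norm (Bs x) * (norm x * nB)" by (simp add: power2_eq_square mult_ac)
    then show "norm (Bs x) \<le> norm x * nB"
      by (cases "norm (Bs x) = 0") (use nB in \<open>auto simp: mult_le_cancel_left\<close>)
  qed
qed

end

lemma bm_set_integrable:
  fixes p :: "real \<Rightarrow> real"
  assumes m: "(\<lambda>x. indicator {u..v} x * p x) \<in> borel_measurable lborel"
    and b: "\<And>x. x \<in> {u..v} \<Longrightarrow> \<bar>p x\<bar> \<le> M"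
  shows "set_integrable lborel {u..v} p"
  unfolding set_integrable_def
proof (rule integrableI_bounded_set[where A="{u..v}" and B=M])
  show "(\<lambda>x. indicator {u..v} x *\<^sub>R p x) \<in> borel_measurable lborel" using m by simp
  show "emeasure lborel {u..v} < \<infinity>" by (cases "u \<le> v") auto
  show "AE x in lborel. x \<in> {u..v} \<longrightarrow> norm (indicator {u..v} x *\<^sub>R p x) \<le> M"
    using b by auto
qed auto

lemma bm_prod_cont:
  fixes p q :: "real \<Rightarrow> real"
  assumes m: "(\<lambda>x. indicator {u..v} x * p x) \<in> borel_measurable lborel"
    and c: "continuous_on {u..v} q"
  shows "(\<lambda>x. indicator {u..v} x * (p x * q x)) \<in> borel_measurable lborel"
proof -
  have q: "(\<lambda>x. indicator {u..v} x *\<^sub>R q x) \<in> borel_measurable lborel"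
    using borel_measurable_continuous_on_indicator[OF _ c] by simp
  have "(\<lambda>x. (indicator {u..v} x * p x) * (indicator {u..v} x *\<^sub>R q x)) \<in> borel_measurable lborel"
    using m q by measurable
  moreover have "(\<lambda>x. (indicator {u..v} x * p x) * (indicator {u..v} x *\<^sub>R q x)) = (\<lambda>x. indicator {u..v} x * (p x * q x))"
    by (auto simp: indicator_def fun_eq_iff)
  ultimately show ?thesis by simp
qed

lemma set_int_to_hk:
  fixes p :: "real \<Rightarrow> real"
  assumes "set_integrable lborel {u..v} p"
  shows "p integrable_on {u..v}" "(LBINT x:{u..v}. p x) = integral {u..v} p"
  using set_borel_integral_eq_integral[OF assms] by auto

lemma bm_prod_si:
  fixes p q :: "real \<Rightarrow> real"
  assumes m: "(\<lambda>x. indicator {u..v} x * p x) \<in> borel_measurable lborel"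
    and c: "continuous_on {u..v} q" and b: "\<And>x. x \<in> {u..v} \<Longrightarrow> \<bar>p x\<bar> \<le> 1"
  shows "set_integrable lborel {u..v} (\<lambda>x. p x * q x)"
proof -
  obtain M where M: "\<And>x. x \<in> {u..v} \<Longrightarrow> norm (q x) \<le> M"
    using compact_imp_bounded[OF compact_continuous_image[OF c compact_Icc]]
    unfolding bounded_iff by (metis atLeastAtMost_iff image_eqI real_norm_def)
  show ?thesis
  proof (rule bm_set_integrable[where M=M])
    show "(\<lambda>x. indicator {u..v} x * (p x * q x)) \<in> borel_measurable lborel"
      by (rule bm_prod_cont[OF m c])
    fix x assume x: "x \<in> {u..v}"
    have "\<bar>p x * q x\<bar> = \<bar>p x\<bar> * \<bar>q x\<bar>" by (simp add: abs_mult)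
    also have "\<dots> \<le> 1 * M" using b[OF x] M[OF x] by (intro mult_mono) auto
    finally show "\<bar>p x * q x\<bar> \<le> M" by simp
  qed
qed

context sys begin

lemma alpha_meas_on: "0 \<le> u \<Longrightarrow> (\<lambda>x. indicator {u..v} x * \<alpha> x) \<in> borel_measurable lborel"
proof -
  assume u: "0 \<le> u"
  have "(\<lambda>x. indicator {u..v} x * (indicator {0..} x * \<alpha> x)) \<in> borel_measurable lborel"
    using alpha_meas by measurable
  moreover have "(\<lambda>x. indicator {u..v} x * (indicator {0..} x * \<alpha> x)) = (\<lambda>x. indicator {u..v} x * \<alpha> x)"
    using u by (auto simp: indicator_def fun_eq_iff)
  ultimately show ?thesis by simp
qed

lemma alpha_shift_meas: "0 \<le> a \<Longrightarrow> (\<lambda>x. indicator {0..T} x * \<alpha> (a + x)) \<in> borel_measurable lborel"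
proof -
  assume a: "0 \<le> a"
  have "(\<lambda>x. indicator {0..} (a + x) * \<alpha> (a + x)) \<in> borel_measurable lborel"
    using measurable_compose[OF _ alpha_meas, of "\<lambda>x. a + x" lborel] by simp
  then have "(\<lambda>x. indicator {0..T} x * (indicator {0..} (a + x) * \<alpha> (a + x))) \<in> borel_measurable lborel"
    by measurable
  moreover have "(\<lambda>x. indicator {0..T} x * (indicator {0..} (a + x) * \<alpha> (a + x))) = (\<lambda>x. indicator {0..T} x * \<alpha> (a + x))"
    using a by (auto simp: indicator_def fun_eq_iff)
  ultimately show ?thesis by simp
qed

lemma amul_si: "0 \<le> u \<Longrightarrow> continuous_on {u..v} q \<Longrightarrow> set_integrable lborel {u..v} (\<lambda>s. \<alpha> s * q s)"
  by (rule bm_prod_si[OF alpha_meas_on]) (use alpha_bnd in auto)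

lemma amul_int: "0 \<le> u \<Longrightarrow> continuous_on {u..v} q \<Longrightarrow> (\<lambda>s. \<alpha> s * q s) integrable_on {u..v}"
  using set_int_to_hk(1)[OF amul_si] by blast

lemma ash_si: "0 \<le> a \<Longrightarrow> continuous_on {0..T} q \<Longrightarrow> set_integrable lborel {0..T} (\<lambda>s. \<alpha> (a + s) * q s)"
  by (rule bm_prod_si[OF alpha_shift_meas]) (use alpha_bnd in auto)

lemma a_int: "0 \<le> u \<Longrightarrow> \<alpha> integrable_on {u..v}"
  using amul_int[of u v "\<lambda>_. 1"] by simp

end

context sys begin

definition nB where "nB = onorm B + onorm Bs + 1"

lemma nB_pos: "nB > 0"
  using onorm_pos_le[OF B] onorm_pos_le[OF Bs_lin] by (simp add: nB_def)

lemma B_bnd: "norm (B u) \<le> nB * norm u"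
proof -
  have "norm (B u) \<le> onorm B * norm u" by (rule onorm[OF B])
  also have "\<dots> \<le> nB * norm u" using onorm_pos_le[OF Bs_lin]
    by (intro mult_right_mono) (auto simp: nB_def)
  finally show ?thesis .
qed

lemma Bs_bnd: "norm (Bs u) \<le> nB * norm u"
proof -
  have "norm (Bs u) \<le> onorm Bs * norm u" by (rule onorm[OF Bs_lin])
  also have "\<dots> \<le> nB * norm u" using onorm_pos_le[OF B]
    by (intro mult_right_mono) (auto simp: nB_def)
  finally show ?thesis .
qed

lemma Bs_z_cont: "continuous_on {0..} (\<lambda>s. Bs (z s))"
  by (rule continuous_on_compose2[OF linear_continuous_on[OF Bs_lin] z_cont]) auto

lemma BBs_z_cont: "continuous_on {0..} (\<lambda>s. B (Bs (z s)))"
  by (rule continuous_on_compose2[OF linear_continuous_on[OF B] Bs_z_cont]) auto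

lemma g_eq: "inner (z s) (\<alpha> s *\<^sub>R B (Bs (z s))) = \<alpha> s * (norm (Bs (z s)))\<^sup>2"
  by (simp add: inner_commute[of "z s"] adj power2_norm_eq_inner)

lemma f_bnd: "s \<ge> 0 \<Longrightarrow> norm (\<alpha> s *\<^sub>R B (Bs (z s))) \<le> nB * (\<alpha> s * norm (Bs (z s)))"
  using alpha_bnd[of s] B_bnd[of "Bs (z s)"] by (simp add: mult_left_mono mult_ac)

lemma cocycle:
  assumes t: "0 \<le> t" and h: "0 \<le> h"
  shows "((\<lambda>s. inner e (S (t + h - s) (\<alpha> s *\<^sub>R B (Bs (z s))))) has_integral inner e (S h (z t) - z (t + h))) {t..t+h}"
proof -
  define F where "F = (\<lambda>s. S (t + h - s) (\<alpha> s *\<^sub>R B (Bs (z s))))"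
  have I1: "(F has_integral (S (t + h) z0 - z (t + h))) {0..t+h}"
    unfolding F_def using z_int[of "t+h"] t h by simp
  have I2: "((S h \<circ> (\<lambda>s. S (t - s) (\<alpha> s *\<^sub>R B (Bs (z s))))) has_integral S h (S t z0 - z t)) {0..t}"
    by (rule has_integral_linear[OF z_int[OF t] S_lin[OF h]])
  have I2': "(F has_integral S h (S t z0 - z t)) {0..t}"
  proof (rule has_integral_eq[OF _ I2])
    fix s assume s: "s \<in> {0..t}"
    have "S (h + (t - s)) (\<alpha> s *\<^sub>R B (Bs (z s))) = S h (S (t - s) (\<alpha> s *\<^sub>R B (Bs (z s))))"
      using s h by (intro S_add) auto
    then show "(S h \<circ> (\<lambda>s. S (t - s) (\<alpha> s *\<^sub>R B (Bs (z s))))) s = F s"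
      by (simp add: F_def algebra_simps)
  qed
  define G where "G = inner e \<circ> F"
  have J1: "(G has_integral inner e (S (t + h) z0 - z (t + h))) {0..t+h}"
    unfolding G_def by (rule has_integral_linear[OF I1 bounded_linear_inner_right])
  have J2: "(G has_integral inner e (S h (S t z0 - z t))) {0..t}"
    unfolding G_def by (rule has_integral_linear[OF I2' bounded_linear_inner_right])
  have Gi: "G integrable_on {t..t+h}"
    using integrable_subinterval_real[OF has_integral_integrable[OF J1], of t "t+h"] t by auto
  have "integral {0..t+h} G = integral {0..t} G + integral {t..t+h} G"
    using Henstock_Kurzweil_Integration.integral_combine[OF t, of "t+h" G] h has_integral_integrable[OF J1] by auto
  then have "integral {t..t+h} G = inner e (S (t + h) z0 - z (t + h)) - inner e (S h (S t z0 - z t))"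
    using integral_unique[OF J1] integral_unique[OF J2] by simp
  also have "\<dots> = inner e (S h (z t) - z (t + h))"
    using S_add[OF h t, of z0] S_diff[OF h, of "S t z0" "z t"] by (simp add: algebra_simps inner_diff_right)
  finally have "(G has_integral inner e (S h (z t) - z (t + h))) {t..t+h}"
    using Gi by (metis has_integral_integrable_integral)
  then show ?thesis by (simp add: G_def F_def o_def)
qed

end

lemma weak_norm_bound:
  fixes w :: "'a::real_inner"
  assumes "\<And>e. \<bar>inner e w\<bar> \<le> norm e * M" "0 \<le> M"
  shows "norm w \<le> M"
proof (cases "w = 0")
  case True then show ?thesis using assms by simp
next
  case False
  have "norm w * norm w \<le> norm w * M"
    using assms(1)[of w] by (simp add: power2_norm_eq_inner[symmetric] power2_eq_square)
  then show ?thesis using False by (simp add: mult_le_cancel_left)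
qed

context sys begin

lemma S_unif:
  assumes K: "compact K" and e: "\<epsilon> > 0"
  shows "\<exists>\<delta>>0. \<forall>x\<in>K. \<forall>r. 0 \<le> r \<and> r \<le> \<delta> \<longrightarrow> norm (S r x - x) \<le> \<epsilon>"
proof -
  have "\<exists>d>0. \<forall>r. 0 \<le> r \<and> r < d \<longrightarrow> norm (S r x - x) < \<epsilon>/3" for x
  proof -
    have "continuous_on {0..} (\<lambda>t. S t x)" by (rule S_cont)
    then have "\<forall>e>0. \<exists>d>0. \<forall>r\<in>{0..}. dist r 0 < d \<longrightarrow> dist (S r x) (S 0 x) < e"
      unfolding continuous_on_iff by (erule_tac x=0 in ballE) auto
    note H = this
    have e3: "\<epsilon>/3 > 0" using e by simp
    obtain d where d: "d > 0" "\<And>r. r \<in> {0..} \<Longrightarrow> dist r 0 < d \<Longrightarrow> dist (S r x) (S 0 x) < \<epsilon>/3"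
      using H e3 by blast
    show ?thesis
    proof (intro exI[of _ d] conjI allI impI)
      fix r :: real assume r: "0 \<le> r \<and> r < d"
      then have "dist (S r x) (S 0 x) < \<epsilon>/3" using d(2)[of r] by (simp add: dist_real_def)
      then show "norm (S r x - x) < \<epsilon>/3" by (simp add: dist_norm S_0)
    qed (rule d(1))
  qed
  then have "\<forall>x. \<exists>d. d > 0 \<and> (\<forall>r. 0 \<le> r \<and> r < d \<longrightarrow> norm (S r x - x) < \<epsilon>/3)" by blast
  from choice[OF this] obtain d where dd: "\<forall>x. d x > 0 \<and> (\<forall>r. 0 \<le> r \<and> r < d x \<longrightarrow> norm (S r x - x) < \<epsilon>/3)"
    by blast
  have d: "\<And>x. d x > 0" "\<And>x r. 0 \<le> r \<Longrightarrow> r < d x \<Longrightarrow> norm (S r x - x) < \<epsilon>/3"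
    using dd by auto
  obtain D where D: "D \<subseteq> K" "finite D" "K \<subseteq> (\<Union>x\<in>D. ball x (\<epsilon>/3))"
  proof (rule compactE_image[OF K, of K "\<lambda>x. ball x (\<epsilon>/3)"])
    show "\<And>x. x \<in> K \<Longrightarrow> open (ball x (\<epsilon>/3))" by simp
    show "K \<subseteq> (\<Union>x\<in>K. ball x (\<epsilon>/3))" using e by force
  qed blast
  define \<delta> where "\<delta> = (if D = {} then 1 else Min (d ` D) / 2)"
  have dpos: "\<delta> > 0"
  proof (cases "D = {}")
    case True then show ?thesis by (simp add: \<delta>_def)
  next
    case False then show ?thesis using D(2) d(1) by (simp add: \<delta>_def Min_gr_iff)
  qed
  have dle: "\<delta> < d y" if "y \<in> D" for y
  proof -
    have "Min (d ` D) \<le> d y" using D that by auto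
    moreover have "Min (d ` D) > 0" using D that d by (subst Min_gr_iff) auto
    moreover have "D \<noteq> {}" using that by auto
    ultimately show ?thesis by (simp add: \<delta>_def)
  qed
  show ?thesis
  proof (intro exI[of _ \<delta>] conjI ballI allI impI dpos)
    fix x r assume x: "x \<in> K" and r: "0 \<le> r \<and> r \<le> \<delta>"
    obtain y where y: "y \<in> D" "x \<in> ball y (\<epsilon>/3)" using D x by blast
    have eq: "S r x - x = S r (x - y) + (S r y - y) + (y - x)"
      using S_diff[of r x y, symmetric] r by simp
    have "norm (S r x - x) \<le> norm (S r (x - y)) + norm (S r y - y) + norm (y - x)"
      unfolding eq using norm_triangle_ineq[of "S r (x - y) + (S r y - y)" "y - x"]
        norm_triangle_ineq[of "S r (x - y)" "S r y - y"] by linarith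
    also have "\<dots> \<le> norm (x - y) + norm (S r y - y) + norm (y - x)"
      using S_contr[of r "x - y"] r by simp
    also have "\<dots> \<le> \<epsilon>/3 + \<epsilon>/3 + \<epsilon>/3"
    proof -
      have "norm (y - x) < \<epsilon>/3" using y(2) by (simp add: dist_norm)
      moreover have "norm (x - y) = norm (y - x)" by (rule norm_minus_commute)
      moreover have "norm (S r y - y) < \<epsilon>/3" using d(2)[of r y] dle[OF y(1)] r by linarith
      ultimately show ?thesis by linarith
    qed
    finally show "norm (S r x - x) \<le> \<epsilon>" by simp
  qed
qed

end

context sys begin
lemma diff_bound:
  assumes a: "0 \<le> a" and s: "0 \<le> s"
  shows "norm (S s (z a) - z (a + s)) \<le> nB * integral {a..a+s} (\<lambda>r. \<alpha> r * norm (Bs (z r)))"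
proof (rule weak_norm_bound)
  have hi: "(\<lambda>r. \<alpha> r * norm (Bs (z r))) integrable_on {a..a+s}"
    by (rule amul_int[OF a], rule continuous_on_norm[OF continuous_on_subset[OF Bs_z_cont]]) (use a in auto)
  show "0 \<le> nB * integral {a..a+s} (\<lambda>r. \<alpha> r * norm (Bs (z r)))"
    using nB_pos a alpha_bnd by (intro mult_nonneg_nonneg integral_nonneg[OF hi]) auto
  fix e
  have c: "((\<lambda>r. inner e (S (a + s - r) (\<alpha> r *\<^sub>R B (Bs (z r))))) has_integral inner e (S s (z a) - z (a + s))) {a..a+s}"
    by (rule cocycle[OF a s])
  have "\<bar>inner e (S s (z a) - z (a + s))\<bar> = norm (integral {a..a+s} (\<lambda>r. inner e (S (a + s - r) (\<alpha> r *\<^sub>R B (Bs (z r))))))"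
    using integral_unique[OF c] by simp
  also have "\<dots> \<le> integral {a..a+s} (\<lambda>r. norm e * nB * (\<alpha> r * norm (Bs (z r))))"
  proof (rule integral_norm_bound_integral)
    show "(\<lambda>r. inner e (S (a + s - r) (\<alpha> r *\<^sub>R B (Bs (z r))))) integrable_on {a..a+s}"
      using c by blast
    show "(\<lambda>r. norm e * nB * (\<alpha> r * norm (Bs (z r)))) integrable_on {a..a+s}"
      using integrable_on_cmult_left[OF hi, of "norm e * nB"] by simp
    fix r assume r: "r \<in> {a..a+s}"
    have "norm (inner e (S (a + s - r) (\<alpha> r *\<^sub>R B (Bs (z r))))) \<le> norm e * norm (S (a + s - r) (\<alpha> r *\<^sub>R B (Bs (z r))))"
      by (simp add: Cauchy_Schwarz_ineq2)
    also have "\<dots> \<le> norm e * norm (\<alpha> r *\<^sub>R B (Bs (z r)))"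
      using r S_contr[of "a + s - r" "\<alpha> r *\<^sub>R B (Bs (z r))"] by (intro mult_left_mono) auto
    also have "\<dots> \<le> norm e * (nB * (\<alpha> r * norm (Bs (z r))))"
      using r a f_bnd[of r] by (intro mult_left_mono) auto
    finally show "norm (inner e (S (a + s - r) (\<alpha> r *\<^sub>R B (Bs (z r))))) \<le> norm e * nB * (\<alpha> r * norm (Bs (z r)))"
      by (simp add: mult_ac)
  qed
  also have "\<dots> = norm e * nB * integral {a..a+s} (\<lambda>r. \<alpha> r * norm (Bs (z r)))"
    using integral_cmul[of "{a..a+s}" "norm e * nB" "\<lambda>r. \<alpha> r * norm (Bs (z r))"] by (simp only: real_scaleR_def)
  also have "\<dots> = norm e * (nB * integral {a..a+s} (\<lambda>r. \<alpha> r * norm (Bs (z r))))"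
    by (rule mult.assoc)
  finally show "\<bar>inner e (S s (z a) - z (a + s))\<bar> \<le> norm e * (nB * integral {a..a+s} (\<lambda>r. \<alpha> r * norm (Bs (z r))))" .
qed

end

lemma partition_mono:
  fixes \<phi> :: "real \<Rightarrow> real"
  assumes t12: "t1 \<le> t2" and dpos: "\<delta> > 0"
    and step: "\<And>t h. t1 \<le> t \<Longrightarrow> t \<le> t2 \<Longrightarrow> 0 < h \<Longrightarrow> h \<le> \<delta> \<Longrightarrow> \<phi> (t + h) \<le> \<phi> t + \<epsilon> * h"
  shows "\<phi> t2 \<le> \<phi> t1 + \<epsilon> * (t2 - t1)"
proof (cases "t1 = t2")
  case True then show ?thesis by simp
next
  case False
  then have lt: "t1 < t2" using t12 by simp
  define n where "n = nat \<lceil>(t2 - t1) / \<delta>\<rceil>"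
  have qpos: "(t2 - t1) / \<delta> > 0" using lt dpos by simp
  have "real_of_int \<lceil>(t2 - t1) / \<delta>\<rceil> > 0" using le_of_int_ceiling[of "(t2 - t1) / \<delta>"] qpos by linarith
  then have c1: "\<lceil>(t2 - t1) / \<delta>\<rceil> \<ge> 1" by linarith
  have n1: "n \<ge> 1" unfolding n_def using nat_mono[OF c1] by simp
  have nge: "real n \<ge> (t2 - t1) / \<delta>" unfolding n_def
    using qpos by linarith
  define d where "d = (t2 - t1) / real n"
  have dp: "d > 0" using lt n1 by (simp add: d_def)
  have dle: "d \<le> \<delta>"
  proof -
    have "t2 - t1 \<le> real n * \<delta>" using nge dpos by (simp add: pos_divide_le_eq)
    then show ?thesis using n1 by (simp add: d_def divide_le_eq mult.commute)
  qed
  have nd: "real n * d = t2 - t1" using n1 by (simp add: d_def)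
  have claim: "k \<le> n \<Longrightarrow> \<phi> (t1 + real k * d) \<le> \<phi> t1 + \<epsilon> * (real k * d)" for k
  proof (induction k)
    case 0 then show ?case by simp
  next
    case (Suc k)
    then have kn: "k \<le> n" by simp
    have "real k * d \<le> real n * d" using kn dp by (simp add: mult_right_mono)
    then have le: "t1 + real k * d \<le> t2" using nd by simp
    have "\<phi> (t1 + real k * d + d) \<le> \<phi> (t1 + real k * d) + \<epsilon> * d"
      by (rule step) (use le dp dle dp in \<open>auto simp: mult_nonneg_nonneg\<close>)
    also have "\<dots> \<le> \<phi> t1 + \<epsilon> * (real k * d) + \<epsilon> * d" using Suc.IH[OF kn] by simp
    finally show ?case by (simp add: algebra_simps)
  qed
  from claim[of n] show ?thesis using nd by simp
qed

context sys begin

lemma S_scale: "r \<ge> 0 \<Longrightarrow> S r (c *\<^sub>R x) = c *\<^sub>R S r x"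
  using linear.scaleR[OF bounded_linear.linear[OF S_lin]] by blast

lemma g_int: "0 \<le> u \<Longrightarrow> (\<lambda>s. \<alpha> s * (norm (Bs (z s)))\<^sup>2) integrable_on {u..v}"
proof -
  assume u: "0 \<le> u"
  have "continuous_on {u..v} (\<lambda>s. (norm (Bs (z s)))\<^sup>2)"
    by (rule continuous_on_power[OF continuous_on_norm[OF continuous_on_subset[OF Bs_z_cont]]]) (use u in auto)
  then show ?thesis by (rule amul_int[OF u])
qed

lemma local_est:
  assumes Tm: "0 \<le> Tm" and e: "\<epsilon> > 0"
  shows "\<exists>\<delta>>0. \<forall>t h. 0 \<le> t \<longrightarrow> t \<le> Tm \<longrightarrow> 0 < h \<longrightarrow> h \<le> \<delta> \<longrightarrow>
     (norm (z (t+h)))\<^sup>2 \<le> (norm (z t))\<^sup>2 - 2 * integral {t..t+h} (\<lambda>s. \<alpha> s * (norm (Bs (z s)))\<^sup>2) + \<epsilon> * h"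
proof -
  define I where "I = {0..Tm+1}"
  have cI: "compact I" by (simp add: I_def)
  have zc: "continuous_on I z" using z_cont by (rule continuous_on_subset) (auto simp: I_def)
  have uc: "continuous_on I (\<lambda>s. B (Bs (z s)))" using BBs_z_cont by (rule continuous_on_subset) (auto simp: I_def)
  obtain M1 where M1: "M1 > 0" "\<And>s. s \<in> I \<Longrightarrow> norm (z s) \<le> M1"
    using compact_imp_bounded[OF compact_continuous_image[OF zc cI]] unfolding bounded_pos by auto
  obtain M2 where M2: "M2 > 0" "\<And>s. s \<in> I \<Longrightarrow> norm (B (Bs (z s))) \<le> M2"
    using compact_imp_bounded[OF compact_continuous_image[OF uc cI]] unfolding bounded_pos by auto
  define \<epsilon>1 where "\<epsilon>1 = \<epsilon> / (4 * (2 * M2 + M1))"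
  have e1: "\<epsilon>1 > 0" using e M1 M2 by (simp add: \<epsilon>1_def)
  have e1eq: "\<epsilon>1 * (2 * M2 + M1) = \<epsilon> / 4" unfolding \<epsilon>1_def using M1 M2 by (simp add: field_simps)
  obtain \<delta>1 where d1: "\<delta>1 > 0" "\<And>x r. x \<in> z ` I \<Longrightarrow> 0 \<le> r \<Longrightarrow> r \<le> \<delta>1 \<Longrightarrow> norm (S r x - x) \<le> \<epsilon>1"
    using S_unif[OF compact_continuous_image[OF zc cI] e1] by blast
  obtain \<delta>2 where d2: "\<delta>2 > 0" "\<And>x r. x \<in> (\<lambda>s. B (Bs (z s))) ` I \<Longrightarrow> 0 \<le> r \<Longrightarrow> r \<le> \<delta>2 \<Longrightarrow> norm (S r x - x) \<le> \<epsilon>1"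
    using S_unif[OF compact_continuous_image[OF uc cI] e1] by blast
  have "uniformly_continuous_on I z" by (rule compact_uniformly_continuous[OF zc cI])
  then obtain \<delta>3 where d3: "\<delta>3 > 0" "\<And>s s'. s \<in> I \<Longrightarrow> s' \<in> I \<Longrightarrow> dist s' s < \<delta>3 \<Longrightarrow> dist (z s') (z s) < \<epsilon>1"
    unfolding uniformly_continuous_on_def using e1 by metis
  define \<delta> where "\<delta> = min (min \<delta>1 \<delta>2) (min (\<delta>3/2) (min 1 (\<epsilon> / (2 * M2\<^sup>2))))"
  have dpos: "\<delta> > 0" using d1 d2 d3 e M2 by (simp add: \<delta>_def)
  show ?thesis
  proof (intro exI[of _ \<delta>] conjI allI impI dpos)
    fix t h :: real assume t0: "0 \<le> t" and tTm: "t \<le> Tm" and h0: "0 < h" and hd: "h \<le> \<delta>"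
    have hd1: "h \<le> \<delta>1" and hd2: "h \<le> \<delta>2" and hd3: "h < \<delta>3" and h1: "h \<le> 1"
      and hd4: "h \<le> \<epsilon> / (2 * M2\<^sup>2)"
      using hd d3 by (auto simp: \<delta>_def)
    define y where "y = S h (z t)"
    define w where "w = S h (z t) - z (t + h)"
    have tI: "t \<in> I" using t0 tTm by (simp add: I_def)
    have sI: "s \<in> I" if "s \<in> {t..t+h}" for s using that t0 tTm h1 by (auto simp: I_def)
    have cw: "((\<lambda>s. inner e (S (t + h - s) (\<alpha> s *\<^sub>R B (Bs (z s))))) has_integral inner e w) {t..t+h}" for e
      unfolding w_def by (rule cocycle[OF t0]) (use h0 in simp)
    have Sf_bnd: "norm (S (t + h - s) (\<alpha> s *\<^sub>R B (Bs (z s)))) \<le> M2" if s: "s \<in> {t..t+h}" for s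
    proof -
      have "norm (S (t + h - s) (\<alpha> s *\<^sub>R B (Bs (z s)))) \<le> norm (\<alpha> s *\<^sub>R B (Bs (z s)))"
        using s by (intro S_contr) auto
      also have "\<dots> = \<bar>\<alpha> s\<bar> * norm (B (Bs (z s)))" by simp
      also have "\<dots> \<le> 1 * M2" using alpha_bnd[of s] s t0 M2(2)[OF sI[OF s]]
        by (intro mult_mono) auto
      finally show ?thesis by simp
    qed
    have wb: "norm w \<le> h * M2"
    proof (rule weak_norm_bound)
      show "0 \<le> h * M2" using h0 M2 by simp
      fix e
      have "norm (inner e w) \<le> (norm e * M2) * measure lborel (cbox t (t + h))"
      proof (rule has_integral_bound[where f="\<lambda>s. inner e (S (t + h - s) (\<alpha> s *\<^sub>R B (Bs (z s))))"])
        show "0 \<le> norm e * M2" using M2 by simp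
        show "((\<lambda>s. inner e (S (t + h - s) (\<alpha> s *\<^sub>R B (Bs (z s))))) has_integral inner e w) (cbox t (t + h))"
          using cw[of e] by simp
        fix s assume "s \<in> cbox t (t + h)"
        then have s: "s \<in> {t..t+h}" by simp
        have "norm (inner e (S (t + h - s) (\<alpha> s *\<^sub>R B (Bs (z s))))) \<le> norm e * norm (S (t + h - s) (\<alpha> s *\<^sub>R B (Bs (z s))))"
          by (simp add: Cauchy_Schwarz_ineq2)
        also have "\<dots> \<le> norm e * M2" using Sf_bnd[OF s] by (simp add: mult_left_mono)
        finally show "norm (inner e (S (t + h - s) (\<alpha> s *\<^sub>R B (Bs (z s))))) \<le> norm e * M2" .
      qed
      then show "\<bar>inner e w\<bar> \<le> norm e * (h * M2)" using h0 by (simp add: mult_ac)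
    qed
    have dbound: "\<bar>inner y (S (t + h - s) (\<alpha> s *\<^sub>R B (Bs (z s)))) - \<alpha> s * (norm (Bs (z s)))\<^sup>2\<bar> \<le> \<epsilon> / 4"
      if s: "s \<in> {t..t+h}" for s
    proof -
      define r where "r = t + h - s"
      define u where "u = B (Bs (z s))"
      have r: "0 \<le> r" "r \<le> h" using s by (auto simp: r_def)
      have a: "0 \<le> \<alpha> s" "\<alpha> s \<le> 1" using alpha_bnd[of s] s t0 by auto
      have Sr: "S r (\<alpha> s *\<^sub>R u) = \<alpha> s *\<^sub>R S r u" using r by (simp add: S_scale)
      have ge: "\<alpha> s * (norm (Bs (z s)))\<^sup>2 = inner (z s) (\<alpha> s *\<^sub>R u)" using g_eq[of s] unfolding u_def by (metis inner_scaleR_right)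
      have split: "inner y (S r (\<alpha> s *\<^sub>R u)) - inner (z s) (\<alpha> s *\<^sub>R u)
          = inner (y - z s) (\<alpha> s *\<^sub>R S r u) + inner (z s) (\<alpha> s *\<^sub>R (S r u - u))"
        unfolding Sr by (simp add: inner_diff_left inner_diff_right scaleR_diff_right algebra_simps)
      have n1: "norm (\<alpha> s *\<^sub>R S r u) \<le> M2"
      proof -
        have "norm (\<alpha> s *\<^sub>R S r u) = \<alpha> s * norm (S r u)" using a by simp
        also have "\<dots> \<le> 1 * norm u" using a S_contr[OF r(1), of u] by (intro mult_mono) auto
        also have "\<dots> \<le> M2" using M2(2)[OF sI[OF s]] by (simp add: u_def)
        finally show ?thesis .
      qed
      have yz: "norm (y - z s) \<le> 2 * \<epsilon>1"
      proof -
        have "y - z s = (S h (z t) - z t) + (z t - z s)" by (simp add: y_def)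
        then have "norm (y - z s) \<le> norm (S h (z t) - z t) + norm (z t - z s)"
          by (metis norm_triangle_ineq)
        moreover have "norm (S h (z t) - z t) \<le> \<epsilon>1"
          using d1(2)[of "z t" h] tI h0 hd1 by auto
        moreover have "norm (z t - z s) < \<epsilon>1"
        proof -
          have "dist t s < \<delta>3" using s hd3 by (auto simp: dist_real_def)
          then have "dist (z t) (z s) < \<epsilon>1" using d3(2)[OF sI[OF s] tI] by simp
          then show ?thesis by (simp add: dist_norm)
        qed
        ultimately show ?thesis by linarith
      qed
      have Su: "norm (S r u - u) \<le> \<epsilon>1"
        using d2(2)[of u r] sI[OF s] r hd2 by (auto simp: u_def)
      have t1: "\<bar>inner (y - z s) (\<alpha> s *\<^sub>R S r u)\<bar> \<le> 2 * \<epsilon>1 * M2"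
      proof -
        have "\<bar>inner (y - z s) (\<alpha> s *\<^sub>R S r u)\<bar> \<le> norm (y - z s) * norm (\<alpha> s *\<^sub>R S r u)"
          by (rule Cauchy_Schwarz_ineq2)
        also have "\<dots> \<le> (2 * \<epsilon>1) * M2" using yz n1 e1 by (intro mult_mono) auto
        finally show ?thesis by simp
      qed
      have t2: "\<bar>inner (z s) (\<alpha> s *\<^sub>R (S r u - u))\<bar> \<le> M1 * \<epsilon>1"
      proof -
        have "\<bar>inner (z s) (\<alpha> s *\<^sub>R (S r u - u))\<bar> \<le> norm (z s) * norm (\<alpha> s *\<^sub>R (S r u - u))"
          by (rule Cauchy_Schwarz_ineq2)
        also have "norm (\<alpha> s *\<^sub>R (S r u - u)) \<le> \<epsilon>1"
        proof -
          have "norm (\<alpha> s *\<^sub>R (S r u - u)) = \<alpha> s * norm (S r u - u)" using a by simp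
          also have "\<dots> \<le> 1 * \<epsilon>1" using a Su by (intro mult_mono) auto
          finally show ?thesis by simp
        qed
        then have "norm (z s) * norm (\<alpha> s *\<^sub>R (S r u - u)) \<le> M1 * \<epsilon>1"
          using M1 M1(2)[OF sI[OF s]] by (intro mult_mono) auto
        finally show ?thesis .
      qed
      have "\<bar>inner y (S r (\<alpha> s *\<^sub>R u)) - inner (z s) (\<alpha> s *\<^sub>R u)\<bar> \<le> 2 * \<epsilon>1 * M2 + M1 * \<epsilon>1"
        unfolding split using t1 t2 by linarith
      also have "\<dots> = \<epsilon> / 4" using e1eq by (simp add: algebra_simps)
      finally show ?thesis unfolding ge[symmetric] by (simp add: r_def u_def)
    qed
    have gi: "((\<lambda>s. \<alpha> s * (norm (Bs (z s)))\<^sup>2) has_integral integral {t..t+h} (\<lambda>s. \<alpha> s * (norm (Bs (z s)))\<^sup>2)) {t..t+h}"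
      using g_int[OF t0] by blast
    have yw: "\<bar>inner y w - integral {t..t+h} (\<lambda>s. \<alpha> s * (norm (Bs (z s)))\<^sup>2)\<bar> \<le> \<epsilon> / 4 * h"
    proof -
      have "norm (inner y w - integral {t..t+h} (\<lambda>s. \<alpha> s * (norm (Bs (z s)))\<^sup>2)) \<le> (\<epsilon> / 4) * measure lborel (cbox t (t + h))"
      proof (rule has_integral_bound[where f="\<lambda>s. inner y (S (t + h - s) (\<alpha> s *\<^sub>R B (Bs (z s)))) - \<alpha> s * (norm (Bs (z s)))\<^sup>2"])
        show "0 \<le> \<epsilon> / 4" using e by simp
        show "((\<lambda>s. inner y (S (t + h - s) (\<alpha> s *\<^sub>R B (Bs (z s)))) - \<alpha> s * (norm (Bs (z s)))\<^sup>2) has_integral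
            (inner y w - integral {t..t+h} (\<lambda>s. \<alpha> s * (norm (Bs (z s)))\<^sup>2))) (cbox t (t + h))"
          using has_integral_diff[OF cw[of y] gi] by simp
        fix s assume "s \<in> cbox t (t + h)"
        then show "norm (inner y (S (t + h - s) (\<alpha> s *\<^sub>R B (Bs (z s)))) - \<alpha> s * (norm (Bs (z s)))\<^sup>2) \<le> \<epsilon> / 4"
          using dbound by simp
      qed
      then show ?thesis using h0 by simp
    qed
    have zeq: "z (t + h) = y - w" by (simp add: y_def w_def)
    have "(norm (z (t + h)))\<^sup>2 = (norm y)\<^sup>2 - 2 * inner y w + (norm w)\<^sup>2"
      unfolding zeq by (simp add: power2_norm_eq_inner inner_diff_left inner_diff_right inner_commute)
    moreover have "(norm y)\<^sup>2 \<le> (norm (z t))\<^sup>2"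
      unfolding y_def using S_contr[of h "z t"] h0 by (intro power_mono) auto
    moreover have "(norm w)\<^sup>2 \<le> \<epsilon> / 2 * h"
    proof -
      have "(norm w)\<^sup>2 \<le> (h * M2)\<^sup>2" using wb by (intro power_mono) auto
      also have "\<dots> = h * (h * M2\<^sup>2)" by (simp add: power2_eq_square)
      also have "\<dots> \<le> h * (\<epsilon> / 2)"
      proof -
        have "h * M2\<^sup>2 \<le> \<epsilon> / (2 * M2\<^sup>2) * M2\<^sup>2" using hd4 M2 by (intro mult_right_mono) auto
        also have "\<dots> = \<epsilon> / 2" using M2 by simp
        finally show ?thesis using h0 by (intro mult_left_mono) auto
      qed
      finally show ?thesis by (simp add: mult.commute)
    qed
    ultimately show "(norm (z (t + h)))\<^sup>2 \<le> (norm (z t))\<^sup>2 - 2 * integral {t..t+h} (\<lambda>s. \<alpha> s * (norm (Bs (z s)))\<^sup>2) + \<epsilon> * h"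
      using yw by linarith
  qed
qed

end

context sys begin

lemma energy:
  assumes t1: "0 \<le> t1" and t12: "t1 \<le> t2"
  shows "(norm (z t2))\<^sup>2 + 2 * integral {t1..t2} (\<lambda>s. \<alpha> s * (norm (Bs (z s)))\<^sup>2) \<le> (norm (z t1))\<^sup>2"
proof -
  define g where "g = (\<lambda>s. \<alpha> s * (norm (Bs (z s)))\<^sup>2)"
  define \<phi> where "\<phi> = (\<lambda>t. (norm (z t))\<^sup>2 + 2 * integral {t1..t} g)"
  have main: "\<phi> t2 \<le> \<phi> t1 + \<epsilon> * (t2 - t1)" if e: "\<epsilon> > 0" for \<epsilon>
  proof -
    obtain \<delta> where d: "\<delta> > 0" and loc: "\<And>t h. 0 \<le> t \<Longrightarrow> t \<le> t2 \<Longrightarrow> 0 < h \<Longrightarrow> h \<le> \<delta> \<Longrightarrow>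
      (norm (z (t+h)))\<^sup>2 \<le> (norm (z t))\<^sup>2 - 2 * integral {t..t+h} g + \<epsilon> * h"
      using local_est[of t2 \<epsilon>] t1 t12 e unfolding g_def by auto
    show ?thesis
    proof (rule partition_mono[OF t12 d])
      fix t h assume t: "t1 \<le> t" "t \<le> t2" and h: "0 < h" "h \<le> \<delta>"
      have gi: "g integrable_on {t1..t+h}" unfolding g_def by (rule g_int[OF t1])
      have comb: "integral {t1..t+h} g = integral {t1..t} g + integral {t..t+h} g"
        using Henstock_Kurzweil_Integration.integral_combine[OF t(1), of "t+h" g] h gi by simp
      have "(norm (z (t+h)))\<^sup>2 \<le> (norm (z t))\<^sup>2 - 2 * integral {t..t+h} g + \<epsilon> * h"
        using loc[of t h] t t1 h by simp
      then show "\<phi> (t + h) \<le> \<phi> t + \<epsilon> * h" unfolding \<phi>_def comb by simp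
    qed
  qed
  have "\<phi> t2 \<le> \<phi> t1"
  proof (cases "t1 = t2")
    case True then show ?thesis by simp
  next
    case False
    then have lt: "t2 - t1 > 0" using t12 by simp
    show ?thesis
    proof (rule field_le_epsilon)
      fix e :: real assume e: "0 < e"
      have "\<phi> t2 \<le> \<phi> t1 + (e / (t2 - t1)) * (t2 - t1)" using main[of "e / (t2 - t1)"] e lt by simp
      then show "\<phi> t2 \<le> \<phi> t1 + e" using lt by simp
    qed
  qed
  then show ?thesis unfolding \<phi>_def g_def by simp
qed

lemma E_mono: "0 \<le> t1 \<Longrightarrow> t1 \<le> t2 \<Longrightarrow> norm (z t2) \<le> norm (z t1)"
proof -
  assume t1: "0 \<le> t1" and t12: "t1 \<le> t2"
  have "0 \<le> integral {t1..t2} (\<lambda>s. \<alpha> s * (norm (Bs (z s)))\<^sup>2)"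
    by (rule integral_nonneg[OF g_int[OF t1]]) (use t1 alpha_bnd in auto)
  then have "(norm (z t2))\<^sup>2 \<le> (norm (z t1))\<^sup>2" using energy[OF t1 t12] by linarith
  then show ?thesis by (simp add: power2_le_iff_abs_le[symmetric] power_mono_iff)
qed

end

lemma cs_aux:
  fixes P D T :: real
  assumes P: "0 \<le> P" and D: "0 \<le> D" and T: "0 < T"
    and H: "\<And>l. l > 0 \<Longrightarrow> P \<le> (D / l + l * T) / 2"
  shows "P\<^sup>2 \<le> T * D"
proof (cases "D = 0")
  case True
  have "P = 0"
  proof (rule ccontr)
    assume "P \<noteq> 0"
    then have Pp: "P > 0" using P by simp
    have "P \<le> (D / (P / T) + (P / T) * T) / 2" using H[of "P / T"] Pp T by simp
    then have "P \<le> P / 2" using True T by simp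
    then show False using Pp by simp
  qed
  then show ?thesis using True by simp
next
  case False
  then have Dp: "D > 0" using D by simp
  define l where "l = sqrt (D / T)"
  have lp: "l > 0" using Dp T by (simp add: l_def)
  have l2: "l * l = D / T" using Dp T by (simp add: l_def)
  have "P \<le> (D / l + l * T) / 2" by (rule H[OF lp])
  also have "D / l = l * T" using l2 lp T by (simp add: field_simps)
  finally have "P \<le> l * T" by (simp add: mult.commute)
  then have "P\<^sup>2 \<le> (l * T)\<^sup>2" using P by (intro power_mono) auto
  also have "\<dots> = T * D" using l2 T by (simp add: power2_eq_square field_simps)
  finally show ?thesis .
qed

context sys begin

lemma obs_step:
  assumes a: "0 \<le> a" and T: "0 < T" "T \<le> T0"
    and obs: "\<And>x. C * (norm x)\<^sup>2 \<le> integral {0..T} (\<lambda>s. \<alpha> (a + s) * (norm (Bs (S s x)))\<^sup>2)"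
  shows "(norm (z (a + T)))\<^sup>2 \<le> exp (- (C / (1 + nB^4 * T0\<^sup>2))) * (norm (z a))\<^sup>2"
proof -
  define g where "g = (\<lambda>s. \<alpha> s * (norm (Bs (z s)))\<^sup>2)"
  define p where "p = (\<lambda>r. \<alpha> r * norm (Bs (z r)))"
  define D where "D = integral {a..a+T} g"
  define P where "P = integral {a..a+T} p"
  define x where "x = z a"
  define \<Gamma> where "\<Gamma> = 1 + nB^4 * T0\<^sup>2"
  have "0 \<le> nB^4 * T0\<^sup>2" using nB_pos by simp
  then have \<Gamma>p: "\<Gamma> > 0" unfolding \<Gamma>_def by linarith
  have aT: "a \<le> a + T" using T by simp
  have gi: "g integrable_on {a..a+T}" unfolding g_def by (rule g_int[OF a])
  have pci: "continuous_on {a..a+T} (\<lambda>r. norm (Bs (z r)))"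
    by (rule continuous_on_norm[OF continuous_on_subset[OF Bs_z_cont]]) (use a in auto)
  have pi: "p integrable_on {a..a+s}" for s unfolding p_def
    by (rule amul_int[OF a], rule continuous_on_norm[OF continuous_on_subset[OF Bs_z_cont]]) (use a in auto)
  have ai: "\<alpha> integrable_on {a..a+T}" by (rule a_int[OF a])
  have pnn: "\<And>r. r \<in> {a..a+T} \<Longrightarrow> 0 \<le> p r" using alpha_bnd a by (auto simp: p_def)
  have gnn: "\<And>r. r \<in> {a..a+T} \<Longrightarrow> 0 \<le> g r" using alpha_bnd a by (auto simp: g_def)
  have Dnn: "0 \<le> D" unfolding D_def by (rule integral_nonneg[OF gi gnn])
  have Pnn: "0 \<le> P" unfolding P_def by (rule integral_nonneg[OF pi pnn])
  \<comment> \<open>Cauchy--Schwarz\<close>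
  have PD: "P\<^sup>2 \<le> T * D"
  proof (rule cs_aux[OF Pnn Dnn T(1)])
    fix l :: real assume l: "l > 0"
    have "P \<le> integral {a..a+T} (\<lambda>r. (g r / l + l * \<alpha> r) / 2)"
      unfolding P_def
    proof (rule integral_le[OF pi])
      show "(\<lambda>r. (g r / l + l * \<alpha> r) / 2) integrable_on {a..a+T}"
        using gi ai by (intro integrable_on_divide integrable_add integrable_on_mult_right integrable_on_divide) auto
      fix r assume r: "r \<in> {a..a+T}"
      have ar: "0 \<le> \<alpha> r" using alpha_bnd[of r] r a by auto
      have "norm (Bs (z r)) \<le> ((norm (Bs (z r)))\<^sup>2 / l + l) / 2"
      proof -
        have "0 \<le> (norm (Bs (z r)) - l)\<^sup>2" by simp
        then have "2 * l * norm (Bs (z r)) \<le> (norm (Bs (z r)))\<^sup>2 + l * l"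
          by (simp add: power2_eq_square algebra_simps)
        then show ?thesis using l by (simp add: field_simps)
      qed
      then have "\<alpha> r * norm (Bs (z r)) \<le> \<alpha> r * (((norm (Bs (z r)))\<^sup>2 / l + l) / 2)"
        using ar by (rule mult_left_mono)
      then show "p r \<le> (g r / l + l * \<alpha> r) / 2" by (simp add: p_def g_def field_simps)
    qed
    also have "\<dots> = (D / l + l * integral {a..a+T} \<alpha>) / 2"
    proof -
      have "integral {a..a+T} (\<lambda>r. (g r / l + l * \<alpha> r) / 2) = integral {a..a+T} (\<lambda>r. g r / l + l * \<alpha> r) / 2"
        by (rule integral_divide)
      also have "integral {a..a+T} (\<lambda>r. g r / l + l * \<alpha> r) = integral {a..a+T} (\<lambda>r. g r / l) + integral {a..a+T} (\<lambda>r. l * \<alpha> r)"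
        by (rule integral_add) (use gi ai in \<open>auto intro: integrable_on_divide integrable_on_mult_right\<close>)
      finally show ?thesis by (simp add: D_def)
    qed
    also have "\<dots> \<le> (D / l + l * T) / 2"
    proof -
      have "integral {a..a+T} \<alpha> \<le> integral {a..a+T} (\<lambda>_. 1::real)"
        by (rule integral_le[OF ai]) (use alpha_bnd a in auto)
      then have "integral {a..a+T} \<alpha> \<le> T" using aT by simp
      then show ?thesis using l by (simp add: mult_left_mono)
    qed
    finally show "P \<le> (D / l + l * T) / 2" .
  qed
  \<comment> \<open>pointwise comparison with the free trajectory\<close>
  have pw: "\<alpha> (a + s) * (norm (Bs (S s x)))\<^sup>2 \<le> 2 * g (s + a) + 2 * nB^4 * P\<^sup>2"
    if s: "s \<in> {0..T}" for s
  proof -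
    have s0: "0 \<le> s" "s \<le> T" using s by auto
    have as: "0 \<le> \<alpha> (a + s)" "\<alpha> (a + s) \<le> 1" using alpha_bnd[of "a + s"] a s0 by auto
    have Ps: "integral {a..a+s} p \<le> P"
      unfolding P_def by (rule integral_subset_le) (use s0 pi pnn in \<open>auto simp: pi\<close>)
    have dn: "norm (S s x - z (a + s)) \<le> nB * P"
    proof -
      have "norm (S s x - z (a + s)) \<le> nB * integral {a..a+s} p"
        unfolding x_def p_def by (rule diff_bound[OF a s0(1)])
      also have "\<dots> \<le> nB * P" using Ps nB_pos by (simp add: mult_left_mono)
      finally show ?thesis .
    qed
    have n2: "norm (Bs (S s x - z (a + s))) \<le> nB * (nB * P)"
      using Bs_bnd[of "S s x - z (a + s)"] dn nB_pos by (meson mult_left_mono order_trans less_imp_le)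
    have "Bs (S s x) = Bs (z (a + s)) + Bs (S s x - z (a + s))"
      using linear_diff[OF bounded_linear.linear[OF Bs_lin]] by (simp add: linear_simps Bs_lin)
    then have "norm (Bs (S s x)) = norm (Bs (z (a + s)) + Bs (S s x - z (a + s)))" by (rule arg_cong)
    then have "norm (Bs (S s x)) \<le> norm (Bs (z (a + s))) + nB * (nB * P)"
      using n2 norm_triangle_ineq[of "Bs (z (a + s))" "Bs (S s x - z (a + s))"] by linarith
    then have "(norm (Bs (S s x)))\<^sup>2 \<le> (norm (Bs (z (a + s))) + nB * (nB * P))\<^sup>2"
      by (intro power_mono) auto
    also have "\<dots> \<le> 2 * (norm (Bs (z (a + s))))\<^sup>2 + 2 * (nB * (nB * P))\<^sup>2"
      by (smt (verit, best) sum_squares_bound zero_le_power2 power2_sum)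
    finally have sq: "(norm (Bs (S s x)))\<^sup>2 \<le> 2 * (norm (Bs (z (a + s))))\<^sup>2 + 2 * (nB^4 * P\<^sup>2)"
      by (simp add: power2_eq_square power4_eq_xxxx mult_ac)
    have "\<alpha> (a + s) * (norm (Bs (S s x)))\<^sup>2 \<le> \<alpha> (a + s) * (2 * (norm (Bs (z (a + s))))\<^sup>2 + 2 * (nB^4 * P\<^sup>2))"
      by (rule mult_left_mono[OF sq as(1)])
    also have "\<dots> = 2 * g (s + a) + \<alpha> (a + s) * (2 * (nB^4 * P\<^sup>2))"
      by (simp add: g_def algebra_simps)
    also have "\<dots> \<le> 2 * g (s + a) + 1 * (2 * (nB^4 * P\<^sup>2))"
      using as by (intro add_left_mono mult_right_mono) auto
    finally show ?thesis by simp
  qed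
  have gsh: "((\<lambda>s. g (s + a)) has_integral D) {0..T}"
    using has_integral_shift_real_ivl[OF integrable_integral[OF gi], of a] by (simp add: D_def)
  have ci: "(\<lambda>s. \<alpha> (a + s) * (norm (Bs (S s x)))\<^sup>2) integrable_on {0..T}"
  proof -
    have "continuous_on {0..T} (\<lambda>s. (norm (Bs (S s x)))\<^sup>2)"
      by (rule continuous_on_power[OF continuous_on_norm[OF continuous_on_compose2[OF linear_continuous_on[OF Bs_lin] continuous_on_subset[OF S_cont]]]]) auto
    then show ?thesis using set_int_to_hk(1)[OF ash_si[OF a]] by blast
  qed
  have "C * (norm x)\<^sup>2 \<le> integral {0..T} (\<lambda>s. \<alpha> (a + s) * (norm (Bs (S s x)))\<^sup>2)" by (rule obs)
  also have "\<dots> \<le> integral {0..T} (\<lambda>s. 2 * g (s + a) + 2 * nB^4 * P\<^sup>2)"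
    by (rule integral_le[OF ci]) (use gsh pw in \<open>auto intro!: integrable_add integrable_on_cmult_left\<close>)
  also have "\<dots> = 2 * D + 2 * nB^4 * P\<^sup>2 * T"
  proof -
    have "((\<lambda>s. 2 * g (s + a) + 2 * nB^4 * P\<^sup>2) has_integral (2 * D + 2 * nB^4 * P\<^sup>2 * T)) {0..T}"
      using has_integral_add[OF has_integral_mult_right[OF gsh, of 2] has_integral_const_real[of "2 * nB^4 * P\<^sup>2" 0 T]] T
      by (simp add: mult_ac)
    then show ?thesis by (rule integral_unique)
  qed
  also have "\<dots> \<le> 2 * D + 2 * nB^4 * (T * D) * T"
    using PD T nB_pos by (intro add_left_mono mult_right_mono mult_left_mono) auto
  also have "\<dots> = 2 * D * (1 + nB^4 * T\<^sup>2)" by (simp add: algebra_simps power2_eq_square)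
  also have "\<dots> \<le> 2 * D * \<Gamma>"
    unfolding \<Gamma>_def using Dnn T nB_pos by (intro mult_left_mono add_left_mono power_mono) auto
  finally have CD: "C * (norm x)\<^sup>2 \<le> 2 * D * \<Gamma>" .
  have en: "(norm (z (a + T)))\<^sup>2 + 2 * D \<le> (norm x)\<^sup>2"
    using energy[OF a aT] by (simp add: D_def g_def x_def)
  have "(norm (z (a + T)))\<^sup>2 \<le> (1 - C / \<Gamma>) * (norm x)\<^sup>2"
  proof -
    have "C / \<Gamma> * (norm x)\<^sup>2 \<le> 2 * D" using CD \<Gamma>p by (simp add: field_simps)
    then show ?thesis using en by (simp add: algebra_simps)
  qed
  also have "\<dots> \<le> exp (- (C / \<Gamma>)) * (norm x)\<^sup>2"
    using exp_ge_add_one_self[of "- (C / \<Gamma>)"] by (intro mult_right_mono) auto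
  finally show ?thesis by (simp add: \<Gamma>_def x_def)
qed

end

lemma split_interval:
  fixes f :: "real \<Rightarrow> real"
  assumes fi: "f integrable_on {a..b}" and T0: "0 < T0" and long: "T0 < b - a"
    and dens: "integral {a..b} f \<ge> \<rho> * (b - a)"
  shows "\<exists>p L. a \<le> p \<and> p + L \<le> b \<and> T0 / 2 < L \<and> L \<le> T0 \<and> integral {p..p+L} f \<ge> \<rho> * L"
proof -
  define q where "q = (b - a) / T0"
  have q1: "q > 1" using long T0 by (simp add: q_def)
  define N where "N = nat \<lceil>q\<rceil>"
  have Nq: "real N \<ge> q" "real N < q + 1" unfolding N_def using q1 by linarith+
  have N1: "real N > 1" using Nq q1 by linarith
  define d where "d = (b - a) / real N"
  have dpos: "d > 0" using long T0 N1 by (simp add: d_def)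
  have Nd: "real N * d = b - a" using N1 by (simp add: d_def)
  have dle: "d \<le> T0"
  proof -
    have "b - a = q * T0" using T0 by (simp add: q_def)
    also have "\<dots> \<le> real N * T0" using Nq T0 by (simp add: mult_right_mono)
    finally show ?thesis using N1 by (simp add: d_def divide_le_eq mult.commute)
  qed
  have dgt: "T0 / 2 < d"
  proof -
    have "T0 * real N < T0 * (q + 1)" using Nq T0 by simp
    also have "\<dots> = (b - a) + T0" using T0 by (simp add: q_def field_simps)
    also have "\<dots> < 2 * (b - a)" using long by simp
    also have "\<dots> = 2 * (real N * d)" using Nd by simp
    finally have "T0 * real N < 2 * d * real N" by (simp add: mult_ac)
    then show ?thesis using N1 by simp
  qed
  have sub: "f integrable_on {c..e}" if "a \<le> c" "e \<le> b" for c e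
    using integrable_subinterval_real[OF fi] that by (cases "c \<le> e") auto
  have sum: "integral {a..a + real k * d} f = (\<Sum>j<k. integral {a + real j * d..a + real j * d + d} f)"
    if "k \<le> N" for k
    using that
  proof (induction k)
    case 0 then show ?case by simp
  next
    case (Suc k)
    have kd: "a + real k * d + d \<le> b"
    proof -
      have "real (Suc k) * d \<le> real N * d" using Suc.prems dpos by (intro mult_right_mono) auto
      then show ?thesis using Nd by (simp add: algebra_simps)
    qed
    have le: "a \<le> a + real k * d" using dpos by simp
    have "integral {a..a + real k * d + d} f = integral {a..a + real k * d} f + integral {a + real k * d..a + real k * d + d} f"
      using Henstock_Kurzweil_Integration.integral_combine[OF le, of "a + real k * d + d" f] dpos sub[of a "a + real k * d + d"] kd
      by simp
    then show ?case using Suc by (simp add: algebra_simps)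
  qed
  show ?thesis
  proof (rule ccontr)
    assume nt: "\<not> ?thesis"
    have small: "integral {a + real j * d..a + real j * d + d} f < \<rho> * d" if "j < N" for j
    proof -
      have "a \<le> a + real j * d" using dpos by simp
      moreover have "a + real j * d + d \<le> b"
      proof -
        have "real (Suc j) * d \<le> real N * d" using that dpos by (intro mult_right_mono) auto
        then show ?thesis using Nd by (simp add: algebra_simps)
      qed
      ultimately show ?thesis using nt dgt dle by (metis not_le)
    qed
    have "integral {a..b} f = (\<Sum>j<N. integral {a + real j * d..a + real j * d + d} f)"
      using sum[of N] Nd by simp
    also have "\<dots> < (\<Sum>j<N. \<rho> * d)"
      by (rule sum_strict_mono) (use N1 small in auto)
    also have "\<dots> = \<rho> * (b - a)" using Nd by (simp add: mult_ac)
    finally show False using dens by simp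
  qed
qed

context sys begin

lemma K_step:
  assumes K: "\<forall>T\<in>{0<..T0}. \<forall>\<alpha>'. Linf01 {0..T} \<alpha>' \<and> (LBINT t:{0..T}. \<alpha>' t) \<ge> \<rho> * T
              \<longrightarrow> classK S Bs T (c T) \<alpha>'"
    and p: "0 \<le> p" and L: "0 < L" "L \<le> T0" and d: "integral {p..p+L} \<alpha> \<ge> \<rho> * L"
  shows "(norm (z (p + L)))\<^sup>2 \<le> exp (- (c L / (1 + nB^4 * T0\<^sup>2))) * (norm (z p))\<^sup>2"
proof (rule obs_step[OF p L])
  define a' where "a' = (\<lambda>s. \<alpha> (p + s))"
  have lin: "Linf01 {0..L} a'"
    unfolding Linf01_def set_borel_measurable_def a'_def
    using alpha_shift_meas[OF p, of L] alpha_bnd p by auto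
  have "integral {0..L} a' = integral {p..p+L} \<alpha>"
    using integral_shift_real_ivl[of p p "p + L" \<alpha>] by (simp add: a'_def add.commute)
  moreover have "(LBINT t:{0..L}. a' t) = integral {0..L} a'"
    using set_int_to_hk(2)[OF ash_si[OF p, of L "\<lambda>_. 1"]] by (simp add: a'_def)
  ultimately have "(LBINT t:{0..L}. a' t) \<ge> \<rho> * L" using d by simp
  then have cK: "classK S Bs L (c L) a'" using K L lin by auto
  fix x
  have cont: "continuous_on {0..L} (\<lambda>s. (norm (Bs (S s x)))\<^sup>2)"
    by (rule continuous_on_power[OF continuous_on_norm[OF continuous_on_compose2[OF linear_continuous_on[OF Bs_lin] continuous_on_subset[OF S_cont]]]]) auto
  have "c L * (norm x)\<^sup>2 \<le> (LBINT t:{0..L}. a' t * (norm (Bs (S t x)))\<^sup>2)"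
    using cK by (simp add: classK_def)
  also have "\<dots> = integral {0..L} (\<lambda>s. \<alpha> (p + s) * (norm (Bs (S s x)))\<^sup>2)"
    using set_int_to_hk(2)[OF ash_si[OF p cont]] by (simp add: a'_def)
  finally show "c L * (norm x)\<^sup>2 \<le> integral {0..L} (\<lambda>s. \<alpha> (p + s) * (norm (Bs (S s x)))\<^sup>2)" .
qed

lemma interval_step:
  assumes K: "\<forall>T\<in>{0<..T0}. \<forall>\<alpha>'. Linf01 {0..T} \<alpha>' \<and> (LBINT t:{0..T}. \<alpha>' t) \<ge> \<rho> * T
              \<longrightarrow> classK S Bs T (c T) \<alpha>'"
    and T0: "0 < T0"
    and m: "\<And>L. T0 / 2 < L \<Longrightarrow> L \<le> T0 \<Longrightarrow> m \<le> c L"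
    and ab: "0 \<le> a" "a < b" and d: "(LBINT t:{a..b}. \<alpha> t) \<ge> \<rho> * (b - a)"
  shows "(norm (z b))\<^sup>2 \<le> exp (- (min (c (b - a)) m / (1 + nB^4 * T0\<^sup>2))) * (norm (z a))\<^sup>2"
proof -
  define \<Gamma> where "\<Gamma> = 1 + nB^4 * T0\<^sup>2"
  have "0 \<le> nB^4 * T0\<^sup>2" using nB_pos by simp
  then have \<Gamma>p: "\<Gamma> > 0" unfolding \<Gamma>_def by linarith
  have di: "integral {a..b} \<alpha> \<ge> \<rho> * (b - a)"
    using d set_int_to_hk(2)[OF amul_si[OF ab(1), of b "\<lambda>_. 1"]] by simp
  show ?thesis
  proof (cases "b - a \<le> T0")
    case True
    have "(norm (z (a + (b - a))))\<^sup>2 \<le> exp (- (c (b - a) / \<Gamma>)) * (norm (z a))\<^sup>2"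
      unfolding \<Gamma>_def by (rule K_step[OF K ab(1)]) (use ab True di in auto)
    also have "\<dots> \<le> exp (- (min (c (b - a)) m / \<Gamma>)) * (norm (z a))\<^sup>2"
      using \<Gamma>p by (intro mult_right_mono) (auto simp: divide_right_mono)
    finally show ?thesis by (simp add: \<Gamma>_def)
  next
    case False
    obtain p L where pL: "a \<le> p" "p + L \<le> b" "T0 / 2 < L" "L \<le> T0" "integral {p..p+L} \<alpha> \<ge> \<rho> * L"
      using split_interval[OF a_int[OF ab(1)] T0 _ di] False by auto
    have p0: "0 \<le> p" using pL ab by simp
    have L0: "0 < L" using pL T0 by simp
    have "norm (z b) \<le> norm (z (p + L))" using E_mono[of "p + L" b] p0 L0 pL by simp
    then have "(norm (z b))\<^sup>2 \<le> (norm (z (p + L)))\<^sup>2" by (intro power_mono) auto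
    also have "\<dots> \<le> exp (- (c L / \<Gamma>)) * (norm (z p))\<^sup>2"
      unfolding \<Gamma>_def by (rule K_step[OF K p0 L0 pL(4) pL(5)])
    also have "\<dots> \<le> exp (- (min (c (b - a)) m / \<Gamma>)) * (norm (z a))\<^sup>2"
    proof (rule mult_mono)
      have "min (c (b - a)) m \<le> c L" using m[OF pL(3) pL(4)] by simp
      then show "exp (- (c L / \<Gamma>)) \<le> exp (- (min (c (b - a)) m / \<Gamma>))"
        using \<Gamma>p by (auto simp: divide_right_mono)
      have "norm (z p) \<le> norm (z a)" using E_mono[OF ab(1) pL(1)] .
      then show "(norm (z p))\<^sup>2 \<le> (norm (z a))\<^sup>2" by (intro power_mono) auto
    qed auto
    finally show ?thesis by (simp add: \<Gamma>_def)
  qed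
qed

end

lemma disj_order:
  fixes a b :: "nat \<Rightarrow> real"
  assumes ab: "\<And>n. a n < b n"
    and disj: "\<forall>m n. m \<noteq> n \<longrightarrow> {a m<..<b m} \<inter> {a n<..<b n} = {}"
    and mn: "m \<noteq> n" "a m \<le> a n"
  shows "b m \<le> a n"
proof (rule ccontr)
  assume "\<not> b m \<le> a n"
  then have bm: "a n < b m" by simp
  define x where "x = (a n + min (b m) (b n)) / 2"
  have "a n < min (b m) (b n)" using bm ab[of n] by simp
  then have "x \<in> {a m<..<b m} \<inter> {a n<..<b n}" using mn(2) by (auto simp: x_def)
  then show False using disj mn(1) by blast
qed

lemma chain_lemma:
  fixes E :: "real \<Rightarrow> real" and a b k :: "nat \<Rightarrow> real"
  assumes mono: "\<And>s t. 0 \<le> s \<Longrightarrow> s \<le> t \<Longrightarrow> E t \<le> E s"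
    and step: "\<And>n. E (b n) \<le> exp (- k n) * E (a n)"
    and ab: "\<And>n. 0 \<le> a n \<and> a n < b n"
    and disj: "\<forall>m n. m \<noteq> n \<longrightarrow> {a m<..<b m} \<inter> {a n<..<b n} = {}"
    and Enn: "\<And>t. 0 \<le> E t"
  shows "finite F \<Longrightarrow> 0 \<le> t \<Longrightarrow> (\<forall>n\<in>F. b n \<le> t) \<Longrightarrow> E t \<le> exp (- sum k F) * E 0"
proof (induction "card F" arbitrary: F t rule: less_induct)
  case less
  show ?case
  proof (cases "F = {}")
    case True then show ?thesis using mono[of 0 t] less.prems by simp
  next
    case False
    have "Max (a ` F) \<in> a ` F" using False less.prems(1) by (intro Max_in) auto
    then obtain n where n: "n \<in> F" "a n = Max (a ` F)" by auto
    have amax: "a m \<le> a n" if "m \<in> F" for m using n(2) that less.prems(1) by simp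
    define F' where "F' = F - {n}"
    have cardlt: "card F' < card F" unfolding F'_def by (rule card_Diff1_less[OF less.prems(1) n(1)])
    have bF': "\<forall>m\<in>F'. b m \<le> a n"
      using disj_order[of a b m n for m] ab disj amax by (auto simp: F'_def)
    have IH: "E (a n) \<le> exp (- sum k F') * E 0"
      using less.hyps[OF cardlt, of "a n"] less.prems(1) ab[of n] bF' by (simp add: F'_def)
    have bt: "b n \<le> t" using less.prems(3) n(1) by simp
    have "E t \<le> E (b n)" using mono[of "b n" t] ab[of n] bt by simp
    also have "\<dots> \<le> exp (- k n) * E (a n)" by (rule step)
    also have "\<dots> \<le> exp (- k n) * (exp (- sum k F') * E 0)" using IH by (simp add: mult_left_mono)
    also have "\<dots> = exp (- sum k F) * E 0"
      using sum.remove[OF less.prems(1) n(1), of k] by (simp add: F'_def exp_add[symmetric] algebra_simps)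
    finally show ?thesis .
  qed
qed

lemma nonsum_min:
  fixes c :: "nat \<Rightarrow> real"
  assumes div: "\<not> summable c" and m: "m > 0" and G: "G > 0"
  shows "\<not> summable (\<lambda>n. min (c n) m / G)"
proof
  assume s: "summable (\<lambda>n. min (c n) m / G)"
  then have "(\<lambda>n. min (c n) m / G) \<longlonglongrightarrow> 0" by (rule summable_LIMSEQ_zero)
  moreover have "0 < m / G" using m G by simp
  ultimately have "eventually (\<lambda>n. min (c n) m / G < m / G) sequentially"
    by (rule order_tendstoD(2))
  then have ev: "eventually (\<lambda>n. min (c n) m / G = c n / G) sequentially"
    by eventually_elim (use G in \<open>auto simp: min_def divide_strict_right_mono split: if_splits\<close>)
  have "summable (\<lambda>n. c n / G)" using summable_cong[OF ev] s by simp
  then have "summable (\<lambda>n. c n / G * G)" by (rule summable_mult2)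
  then show False using div G by simp
qed

lemma final_limit:
  fixes E :: "real \<Rightarrow> real" and k :: "nat \<Rightarrow> real"
  assumes Enn: "\<And>t. 0 \<le> E t" and knn: "\<And>n. 0 \<le> k n" and ns: "\<not> summable k"
    and bound: "\<And>N. \<exists>T. \<forall>t\<ge>T. E t \<le> exp (- sum k {..<N}) * E 0"
  shows "(E \<longlongrightarrow> 0) at_top"
proof (rule order_tendstoI)
  fix y :: real assume "y < 0"
  then show "eventually (\<lambda>t. y < E t) at_top" using Enn by (auto intro: always_eventually less_le_trans)
next
  fix \<epsilon> :: real assume e: "0 < \<epsilon>"
  define X where "X = E 0 / \<epsilon>"
  have X0: "X \<ge> 0" using Enn[of 0] e by (simp add: X_def)
  have "\<exists>N. sum k {..<N} > X"
  proof (rule ccontr)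
    assume "\<not> ?thesis"
    then have "\<And>N. sum k {..<N} \<le> X" by (simp add: not_less)
    then have "summable k" by (rule summableI_nonneg_bounded[OF knn])
    then show False using ns by simp
  qed
  then obtain N where N: "sum k {..<N} > X" by blast
  obtain T where T: "\<And>t. t \<ge> T \<Longrightarrow> E t \<le> exp (- sum k {..<N}) * E 0" using bound by blast
  have key: "exp (- sum k {..<N}) * E 0 < \<epsilon>"
  proof -
    have "exp (- sum k {..<N}) * E 0 \<le> exp (- X) * E 0"
      using N Enn[of 0] by (intro mult_right_mono) auto
    also have "\<dots> < \<epsilon>"
    proof -
      have "1 + X \<le> exp X" by (rule exp_ge_add_one_self)
      then have "exp (- X) \<le> 1 / (1 + X)" using X0 by (simp add: exp_minus field_simps)
      then have "exp (- X) * E 0 \<le> 1 / (1 + X) * E 0" using Enn[of 0] by (rule mult_right_mono)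
      then have "exp (- X) * E 0 \<le> E 0 / (1 + X)" by simp
      also have "\<dots> < \<epsilon>"
      proof -
        have "E 0 = X * \<epsilon>" using e by (simp add: X_def)
        then have "E 0 < \<epsilon> * (1 + X)" using e by (simp add: algebra_simps)
        then show ?thesis using X0 by (simp add: divide_less_eq)
      qed
      finally show ?thesis .
    qed
    finally show ?thesis .
  qed
  show "eventually (\<lambda>t. E t < \<epsilon>) at_top"
    using T key by (auto simp: eventually_at_top_linorder intro: le_less_trans)
qed

theorem theorem5p2:
  fixes S :: "real \<Rightarrow> 'h::{real_inner,complete_space} \<Rightarrow> 'h"
    and B :: "'u::{real_inner,complete_space} \<Rightarrow> 'h"
    and Bs :: "'h \<Rightarrow> 'u"
    and \<rho> T0 :: real
    and c :: "real \<Rightarrow> real"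
    and a b :: "nat \<Rightarrow> real"
    and \<alpha> :: "real \<Rightarrow> real"
    and z0 :: 'h and z :: "real \<Rightarrow> 'h"
  assumes sg: "C0_contraction_semigroup S"
    and B: "bounded_linear B" and Bs: "is_adjoint B Bs"
    and rho: "\<rho> > 0" and T0: "T0 > 0"
    and c_pos: "\<forall>T>0. c T > 0" and c_cont: "continuous_on {0<..} c"
    and K: "\<forall>T\<in>{0<..T0}. \<forall>\<alpha>'. Linf01 {0..T} \<alpha>' \<and> (LBINT t:{0..T}. \<alpha>' t) \<ge> \<rho> * T
              \<longrightarrow> classK S Bs T (c T) \<alpha>'"
    and ab: "\<forall>n. 0 \<le> a n \<and> a n < b n"
    and disj: "\<forall>m n. m \<noteq> n \<longrightarrow> {a m<..<b m} \<inter> {a n<..<b n} = {}"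
    and alpha: "Linf01 {0..} \<alpha>"
    and dens: "\<forall>n. (LBINT t:{a n..b n}. \<alpha> t) \<ge> \<rho> * (b n - a n)"
    and div: "\<not> summable (\<lambda>n. c (b n - a n))"
    and sol: "mild_solution S B Bs \<alpha> z0 z"
  shows "((\<lambda>t. norm (z t)) \<longlongrightarrow> 0) at_top"
proof -
  interpret sys S B Bs \<alpha> z0 z using sg B Bs alpha sol by (simp add: sys_def)
  define \<Gamma> where "\<Gamma> = 1 + nB^4 * T0\<^sup>2"
  have "0 \<le> nB^4 * T0\<^sup>2" using nB_pos by simp
  then have \<Gamma>p: "\<Gamma> > 0" unfolding \<Gamma>_def by linarith
  have sub: "{T0/2..T0} \<subseteq> {0<..}" using T0 by auto
  have cc: "continuous_on {T0/2..T0} c" by (rule continuous_on_subset[OF c_cont sub])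
  have "\<exists>x\<in>{T0/2..T0}. \<forall>y\<in>{T0/2..T0}. c x \<le> c y"
    by (rule continuous_attains_inf[OF compact_Icc _ cc]) (use T0 in simp)
  then obtain tm where tm: "tm \<in> {T0/2..T0}" "\<And>y. y \<in> {T0/2..T0} \<Longrightarrow> c tm \<le> c y"
    by blast
  define m where "m = c tm"
  have mpos: "m > 0" using c_pos tm(1) T0 by (auto simp: m_def)
  have mle: "\<And>L. T0 / 2 < L \<Longrightarrow> L \<le> T0 \<Longrightarrow> m \<le> c L" using tm(2) by (auto simp: m_def)
  define k where "k = (\<lambda>n. min (c (b n - a n)) m / \<Gamma>)"
  define E where "E = (\<lambda>t. (norm (z t))\<^sup>2)"
  have knn: "0 \<le> k n" for n
  proof -
    have "0 < c (b n - a n)" using c_pos ab by simp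
    then have "0 \<le> min (c (b n - a n)) m" using mpos by simp
    then show ?thesis using \<Gamma>p by (simp add: k_def)
  qed
  have ns: "\<not> summable k" unfolding k_def by (rule nonsum_min[OF div mpos \<Gamma>p])
  have step: "E (b n) \<le> exp (- k n) * E (a n)" for n
    unfolding E_def k_def \<Gamma>_def
    by (rule interval_step[OF K T0 mle]) (use ab dens in auto)
  have mono: "E t \<le> E s" if "0 \<le> s" "s \<le> t" for s t
    unfolding E_def using E_mono[OF that] by (intro power_mono) auto
  have chain: "finite F \<Longrightarrow> 0 \<le> t \<Longrightarrow> (\<forall>n\<in>F. b n \<le> t) \<Longrightarrow> E t \<le> exp (- sum k F) * E 0" for F t
    by (rule chain_lemma[OF mono step _ disj]) (use ab in \<open>auto simp: E_def\<close>)
  have bound: "\<exists>T. \<forall>t\<ge>T. E t \<le> exp (- sum k {..<N}) * E 0" for N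
  proof (intro exI allI impI)
    fix t assume t: "max 0 (Max (insert 0 (b ` {..<N}))) \<le> t"
    show "E t \<le> exp (- sum k {..<N}) * E 0"
      by (rule chain) (use t in auto)
  qed
  have "(E \<longlongrightarrow> 0) at_top"
    by (rule final_limit[OF _ knn ns bound]) (simp add: E_def)
  then have "((\<lambda>t. sqrt (E t)) \<longlongrightarrow> sqrt 0) at_top" by (rule tendsto_real_sqrt)
  then show ?thesis by (simp add: E_def)
qed

end
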